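(* Let $(\mathbb{B}^n_1(\mathbf{0}),\mathsf{B},\mathscr{L}^n)$ be Berwald's metric space with Lebesgue measure, where $$\mathsf{B}(x,y)=\frac{\big(\sqrt{(1-|x|^2)|y|^2+\langle x,y\rangle^2}+\langle x,y\rangle\big)^2}{(1-|x|^2)^2\sqrt{(1-|x|^2)|y|^2+\langle x,y\rangle^2}}.$$ Define $w(x)=-\left[\ln\left(\frac{2-|x|}{1-|x|}\right)\right]^{-1/n}$ on $\mathbb{B}^n_1(\mathbf{0})$. Then $w\in W^{1,p}_0(\mathbb{B}^n_1(\mathbf{0}),\mathsf{B},\mathscr{L}^n)$ for every $p\in[1,+\infty)$.
   Context: For a Finsler metric $F$ on $M$ with co-metric $F^*(x,\eta)=\sup_{y\ne0}\eta(y)/F(x,y)$, a smooth positive measure $\mathfrak m$ and $p\in[1,\infty)$, set $\|u\|_{W^{1,p}_{\mathfrak m}}=(\int_M|u|^pd\mathfrak m)^{1/p}+(\int_MF^{*p}(du)\,d\mathfrak m)^{1/p}$ (possibly $+\infty$). $W^{1,p}_0(M,F,\mathfrak m)$ is the set of functions $u$ for which there exist $u_k\in C^\infty_0(M)$ with $\|u-u_k\|_{W^{1,p}_{\mathfrak m}}\to0$. *)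

theory Defs
  imports "HOL-Analysis.Analysis"
begin

definition cometric :: "('a::real_normed_vector \<Rightarrow> 'a \<Rightarrow> real) \<Rightarrow> 'a \<Rightarrow> ('a \<Rightarrow> real) \<Rightarrow> real" where
  "cometric F x \<eta> = (SUP y\<in>-{0}. \<eta> y / F x y)"

fun iter_dd :: "('a::real_normed_vector \<Rightarrow> real) \<Rightarrow> 'a list \<Rightarrow> 'a \<Rightarrow> real" where
  "iter_dd f [] = f"
| "iter_dd f (v # vs) = (\<lambda>x. frechet_derivative (iter_dd f vs) (at x) v)"

definition smooth_on :: "'a::real_normed_vector set \<Rightarrow> ('a \<Rightarrow> real) \<Rightarrow> bool" where
  "smooth_on S f \<longleftrightarrow> (\<forall>vs. \<forall>x\<in>S. iter_dd f vs differentiable (at x))"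

definition Cinf0 :: "'a::real_normed_vector set \<Rightarrow> ('a \<Rightarrow> real) set" where
  "Cinf0 M = {f. smooth_on M f \<and> compact (closure {x. f x \<noteq> 0}) \<and> closure {x. f x \<noteq> 0} \<subseteq> M}"

definition enn_root :: "real \<Rightarrow> ennreal \<Rightarrow> ennreal" where
  "enn_root p t = (if t = \<infinity> then \<infinity> else ennreal (enn2real t powr (1 / p)))"

(* Sobolev norm ||u||_{W^{1,p}_m} on M (possibly \<infinity>); du is the Frechet differential,
   taken as \<infinity> at points of non-differentiability. *)
definition sobolev_norm ::
  "('a::euclidean_space \<Rightarrow> 'a \<Rightarrow> real) \<Rightarrow> 'a set \<Rightarrow> 'a measure \<Rightarrow> real \<Rightarrow> ('a \<Rightarrow> real) \<Rightarrow> ennreal" where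
  "sobolev_norm F M m p u =
     enn_root p (\<integral>\<^sup>+ x \<in> M. ennreal (\<bar>u x\<bar> powr p) \<partial>m)
   + enn_root p (\<integral>\<^sup>+ x \<in> M. (if u differentiable (at x)
                     then ennreal (cometric F x (frechet_derivative u (at x)) powr p)
                     else \<infinity>) \<partial>m)"

definition W0 ::
  "('a::euclidean_space \<Rightarrow> 'a \<Rightarrow> real) \<Rightarrow> 'a set \<Rightarrow> 'a measure \<Rightarrow> real \<Rightarrow> ('a \<Rightarrow> real) set" where
  "W0 F M m p = {u. \<exists>v. (\<forall>k. v k \<in> Cinf0 M) \<and>
       (\<lambda>k. sobolev_norm F M m p (\<lambda>x. u x - v k x)) \<longlonglongrightarrow> 0}"

definition berwald :: "real^'n \<Rightarrow> real^'n \<Rightarrow> real" where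
  "berwald x y =
    (let a = 1 - (norm x)\<^sup>2; s = sqrt (a * (norm y)\<^sup>2 + (inner x y)\<^sup>2)
     in (s + inner x y)\<^sup>2 / (a\<^sup>2 * s))"

end

theory Submission
  imports Defs
begin

definition Em :: "nat \<Rightarrow> real \<Rightarrow> real" where
  "Em m u = (if 0 < u then exp (- inverse u) / u ^ m else 0)"

lemma Em_tendsto0: "(Em m \<longlongrightarrow> 0) (at (0::real))"
proof -
  have r: "(Em m \<longlongrightarrow> 0) (at_right 0)"
  proof -
    have "((\<lambda>x. x ^ m / exp x) \<longlongrightarrow> (0::real)) at_top" by (rule tendsto_power_div_exp_0)
    moreover have "eventually (\<lambda>x. x ^ m / exp x = Em m (inverse x)) at_top"
      using eventually_gt_at_top[of 0]
      by eventually_elim (simp add: Em_def exp_minus field_simps power_inverse)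
    ultimately have "((\<lambda>x. Em m (inverse x)) \<longlongrightarrow> 0) at_top"
      using tendsto_cong by fastforce
    then show ?thesis unfolding filterlim_at_right_to_top .
  qed
  have l: "(Em m \<longlongrightarrow> 0) (at_left 0)"
  proof -
    have "eventually (\<lambda>x. 0 = Em m x) (at_left (0::real))"
    proof -
      have "eventually (\<lambda>x. x \<in> {-1<..<(0::real)}) (at_left 0)" by (rule eventually_at_left_real) simp
      then show ?thesis by eventually_elim (auto simp: Em_def)
    qed
    then show ?thesis using tendsto_cong[of "\<lambda>_. 0" "Em m"] by auto
  qed
  show ?thesis using l r by (simp add: filterlim_split_at)
qed

lemma Em_0 [simp]: "Em m 0 = 0" by (simp add: Em_def)

lemma Em_deriv: "(Em m has_real_derivative (Em (m+2) u - real m * Em (m+1) u)) (at u)"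
proof (cases "u > 0")
  case True
  have "((\<lambda>u. exp (- inverse u) / u ^ m) has_real_derivative (Em (m+2) u - real m * Em (m+1) u)) (at u)"
    using True
    apply -
    apply (rule derivative_eq_intros refl | simp)+
    apply (cases m)
    apply (simp_all add: Em_def field_simps power_Suc)
    done
  moreover have "eventually (\<lambda>x. x \<in> {0<..}) (nhds u)" using True
    by (intro eventually_nhds_in_open) auto
  ultimately show ?thesis
    by (subst DERIV_cong_ev[OF refl _ refl]) (auto elim!: eventually_mono simp: Em_def)
next
  case False
  show ?thesis
  proof (cases "u < 0")
    case True
    have "eventually (\<lambda>x. x \<in> {..<0}) (nhds u)" using True
      by (intro eventually_nhds_in_open) auto
    then have "DERIV (Em m) u :> 0 \<longleftrightarrow> DERIV (\<lambda>_. 0) u :> 0"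
      by (intro DERIV_cong_ev) (auto elim!: eventually_mono simp: Em_def)
    then show ?thesis using True by (simp add: Em_def)
  next
    case False
    with \<open>\<not> u > 0\<close> have u: "u = 0" by simp
    have "((\<lambda>y. (Em m y - Em m 0) / (y - 0)) \<longlongrightarrow> 0) (at 0)"
    proof -
      have "\<And>y. (Em m y - Em m 0) / (y - 0) = Em (Suc m) y"
        by (simp add: Em_def field_simps)
      then show ?thesis using Em_tendsto0[of "Suc m"] by simp
    qed
    then show ?thesis unfolding u by (simp add: has_field_derivative_iff)
  qed
qed

definition dclosed :: "'a::real_normed_vector set \<Rightarrow> ('a \<Rightarrow> real) set \<Rightarrow> bool" where
  "dclosed S C \<longleftrightarrow> (\<forall>f\<in>C. \<exists>f'. (\<forall>x\<in>S. (f has_derivative f' x) (at x)) \<and> (\<forall>v. (\<lambda>x. f' x v) \<in> C))"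

lemma iter_dd_class:
  assumes S: "open S" and C: "dclosed S C" and g0: "g0 \<in> C" and eq: "\<forall>y\<in>S. f y = g0 y"
  shows "\<exists>g\<in>C. \<forall>y\<in>S. iter_dd f vs y = g y"
proof (induction vs)
  case Nil
  then show ?case using g0 eq by auto
next
  case (Cons v vs)
  then obtain g where g: "g \<in> C" "\<forall>y\<in>S. iter_dd f vs y = g y" by blast
  then obtain g' where g': "\<forall>x\<in>S. (g has_derivative g' x) (at x)" "\<forall>v. (\<lambda>x. g' x v) \<in> C"
    using C unfolding dclosed_def by blast
  have "\<forall>y\<in>S. iter_dd f (v # vs) y = g' y v"
  proof
    fix y assume y: "y \<in> S"
    have "(iter_dd f vs has_derivative g' y) (at y)"
      by (rule has_derivative_transform_within_open[OF g'(1)[rule_format, OF y] S y]) (use g in auto)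
    then show "iter_dd f (v # vs) y = g' y v" by (simp add: frechet_derivative_at[symmetric])
  qed
  then show ?case using g'(2) by (intro bexI[where x="\<lambda>x. g' x v"]) auto
qed

lemma smooth_local:
  assumes "\<forall>x\<in>M. \<exists>S C g. open S \<and> x \<in> S \<and> dclosed S C \<and> g \<in> C \<and> (\<forall>y\<in>S. f y = g y)"
  shows "smooth_on M f"
  unfolding smooth_on_def
proof (intro allI ballI)
  fix vs x assume x: "x \<in> M"
  then obtain S C g where S: "open S" "x \<in> S" "dclosed S C" "g \<in> C" "\<forall>y\<in>S. f y = g y"
    using assms by blast
  then obtain h where h: "h \<in> C" "\<forall>y\<in>S. iter_dd f vs y = h y"
    using iter_dd_class by blast
  then obtain h' where h': "\<forall>x\<in>S. (h has_derivative h' x) (at x)"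
    using S(3) unfolding dclosed_def by blast
  have "(iter_dd f vs has_derivative h' x) (at x)"
    by (rule has_derivative_transform_within_open[OF h'[rule_format, OF S(2)] S(1) S(2)]) (use h in auto)
  then show "iter_dd f vs differentiable (at x)" unfolding differentiable_def by blast
qed

definition S0 :: "'a::real_inner set" where "S0 = {x. 0 < norm x \<and> norm x < 1}"

lemma open_S0: "open S0"
  unfolding S0_def by (intro open_Collect_conj open_Collect_less continuous_intros)

inductive_set K :: "('a::real_inner \<Rightarrow> real) set" where
  Kc: "(\<lambda>x. c) \<in> K"
| Ki: "(\<lambda>x. inner x v) \<in> K"
| Kn: "norm \<in> K"
| Kinv: "G \<in> K \<Longrightarrow> (\<forall>x\<in>S0. G x \<noteq> 0) \<Longrightarrow> (\<lambda>x. inverse (G x)) \<in> K"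
| Kln: "G \<in> K \<Longrightarrow> (\<forall>x\<in>S0. G x > 0) \<Longrightarrow> (\<lambda>x. ln (G x)) \<in> K"
| Kpow: "G \<in> K \<Longrightarrow> (\<forall>x\<in>S0. G x > 0) \<Longrightarrow> (\<lambda>x. G x powr a) \<in> K"
| KE: "G \<in> K \<Longrightarrow> (\<lambda>x. Em m (G x)) \<in> K"
| Kadd: "F \<in> K \<Longrightarrow> G \<in> K \<Longrightarrow> (\<lambda>x. F x + G x) \<in> K"
| Kmul: "F \<in> K \<Longrightarrow> G \<in> K \<Longrightarrow> (\<lambda>x. F x * G x) \<in> K"

lemma K_deriv:
  assumes "f \<in> K"
  shows "\<exists>f'. (\<forall>x\<in>S0. (f has_derivative f' x) (at x)) \<and> (\<forall>v. (\<lambda>x. f' x v) \<in> K)"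
  using assms
proof (induction rule: K.induct)
  case (Kc c)
  show ?case by (rule exI[of _ "\<lambda>x v. 0"]) (auto intro: K.Kc)
next
  case (Ki w)
  show ?case
    by (rule exI[of _ "\<lambda>x v. inner v w"]) (auto intro: K.Kc derivative_eq_intros)
next
  case Kn
  have nK: "(\<lambda>x. inverse (norm x)) \<in> (K :: ('a \<Rightarrow> real) set)"
    by (rule K.Kinv[OF K.Kn]) (auto simp: S0_def)
  show ?case
  proof (rule exI[of _ "\<lambda>x v. inner x v * inverse (norm x)"], intro conjI ballI allI)
    fix x :: 'a assume "x \<in> S0"
    then have "x \<noteq> 0" by (auto simp: S0_def)
    from has_derivative_norm[OF this] show "(norm has_derivative (\<lambda>v. inner x v * inverse (norm x))) (at x)"
      by (simp add: sgn_div_norm divide_inverse inner_commute mult.commute)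
  next
    fix v :: 'a show "(\<lambda>x. inner x v * inverse (norm x)) \<in> K"
      by (rule K.Kmul[OF K.Ki nK])
  qed
next
  case (Kinv G)
  then obtain G' where G': "\<forall>x\<in>S0. (G has_derivative G' x) (at x)" "\<forall>v. (\<lambda>x. G' x v) \<in> K" by blast
  have iK: "(\<lambda>x. inverse (G x)) \<in> K" by (rule K.Kinv[OF Kinv.hyps])
  show ?case
  proof (rule exI[of _ "\<lambda>x v. (-1) * G' x v * (inverse (G x) * inverse (G x))"], intro conjI ballI allI)
    fix x :: 'a assume x: "x \<in> S0"
    show "((\<lambda>x. inverse (G x)) has_derivative (\<lambda>v. (-1) * G' x v * (inverse (G x) * inverse (G x)))) (at x)"
      using G'(1)[rule_format, OF x] Kinv.hyps(2) x
      by (auto intro!: derivative_eq_intros simp: field_simps)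
  next
    fix v show "(\<lambda>x. (-1) * G' x v * (inverse (G x) * inverse (G x))) \<in> K"
      by (intro K.Kmul K.Kc G'(2)[rule_format] iK)
  qed
next
  case (Kln G)
  then obtain G' where G': "\<forall>x\<in>S0. (G has_derivative G' x) (at x)" "\<forall>v. (\<lambda>x. G' x v) \<in> K" by blast
  have iK: "(\<lambda>x. inverse (G x)) \<in> K" using Kln.hyps by (intro K.Kinv) auto
  show ?case
  proof (rule exI[of _ "\<lambda>x v. G' x v * inverse (G x)"], intro conjI ballI allI)
    fix x :: 'a assume x: "x \<in> S0"
    show "((\<lambda>x. ln (G x)) has_derivative (\<lambda>v. G' x v * inverse (G x))) (at x)"
      using G'(1)[rule_format, OF x] Kln.hyps(2) x
      by (auto intro!: derivative_eq_intros simp: field_simps)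
  next
    fix v show "(\<lambda>x. G' x v * inverse (G x)) \<in> K"
      by (intro K.Kmul G'(2)[rule_format] iK)
  qed
next
  case (Kpow G a)
  then obtain G' where G': "\<forall>x\<in>S0. (G has_derivative G' x) (at x)" "\<forall>v. (\<lambda>x. G' x v) \<in> K" by blast
  have iK: "(\<lambda>x. inverse (G x)) \<in> K" using Kpow.hyps by (intro K.Kinv) auto
  have pK: "(\<lambda>x. G x powr a) \<in> K" using Kpow.hyps by (intro K.Kpow) auto
  show ?case
  proof (rule exI[of _ "\<lambda>x v. G x powr a * (G' x v * a * inverse (G x))"], intro conjI ballI allI)
    fix x :: 'a assume x: "x \<in> S0"
    show "((\<lambda>x. G x powr a) has_derivative (\<lambda>v. G x powr a * (G' x v * a * inverse (G x)))) (at x)"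
      using G'(1)[rule_format, OF x] Kpow.hyps(2) x
      by (auto intro!: derivative_eq_intros simp: field_simps)
  next
    fix v show "(\<lambda>x. G x powr a * (G' x v * a * inverse (G x))) \<in> K"
      by (intro K.Kmul K.Kc G'(2)[rule_format] iK pK)
  qed
next
  case (KE G m)
  then obtain G' where G': "\<forall>x\<in>S0. (G has_derivative G' x) (at x)" "\<forall>v. (\<lambda>x. G' x v) \<in> K" by blast
  show ?case
  proof (rule exI[of _ "\<lambda>x v. (Em (m+2) (G x) + (- real m) * Em (m+1) (G x)) * G' x v"], intro conjI ballI allI)
    fix x :: 'a assume x: "x \<in> S0"
    have d: "(Em m has_derivative (\<lambda>h. (Em (m+2) (G x) - real m * Em (m+1) (G x)) * h)) (at (G x))"
      using Em_deriv[of m "G x"] by (simp add: has_field_derivative_def)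
    show "((\<lambda>x. Em m (G x)) has_derivative (\<lambda>v. (Em (m+2) (G x) + (- real m) * Em (m+1) (G x)) * G' x v)) (at x)"
      using has_derivative_compose[OF G'(1)[rule_format, OF x] d]
      by (simp add: o_def algebra_simps)
  next
    fix v show "(\<lambda>x. (Em (m+2) (G x) + (- real m) * Em (m+1) (G x)) * G' x v) \<in> K"
      by (intro K.Kmul K.Kadd K.Kc G'(2)[rule_format] K.KE KE.hyps)
  qed
next
  case (Kadd F G)
  then obtain F' G' where F': "\<forall>x\<in>S0. (F has_derivative F' x) (at x)" "\<forall>v. (\<lambda>x. F' x v) \<in> K"
    and G': "\<forall>x\<in>S0. (G has_derivative G' x) (at x)" "\<forall>v. (\<lambda>x. G' x v) \<in> K" by blast
  show ?case
  proof (rule exI[of _ "\<lambda>x v. F' x v + G' x v"], intro conjI ballI allI)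
    fix x :: 'a assume x: "x \<in> S0"
    show "((\<lambda>x. F x + G x) has_derivative (\<lambda>v. F' x v + G' x v)) (at x)"
      using F'(1)[rule_format, OF x] G'(1)[rule_format, OF x] by (rule has_derivative_add)
  next
    fix v show "(\<lambda>x. F' x v + G' x v) \<in> K" by (intro K.Kadd F'(2)[rule_format] G'(2)[rule_format])
  qed
next
  case (Kmul F G)
  then obtain F' G' where F': "\<forall>x\<in>S0. (F has_derivative F' x) (at x)" "\<forall>v. (\<lambda>x. F' x v) \<in> K"
    and G': "\<forall>x\<in>S0. (G has_derivative G' x) (at x)" "\<forall>v. (\<lambda>x. G' x v) \<in> K" by blast
  show ?case
  proof (rule exI[of _ "\<lambda>x v. F x * G' x v + F' x v * G x"], intro conjI ballI allI)
    fix x :: 'a assume x: "x \<in> S0"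
    show "((\<lambda>x. F x * G x) has_derivative (\<lambda>v. F x * G' x v + F' x v * G x)) (at x)"
      using F'(1)[rule_format, OF x] G'(1)[rule_format, OF x] by (rule has_derivative_mult)
  next
    fix v show "(\<lambda>x. F x * G' x v + F' x v * G x) \<in> K"
      by (intro K.Kadd K.Kmul F'(2)[rule_format] G'(2)[rule_format] Kmul.hyps)
  qed
qed

lemma dclosed_K: "dclosed S0 K"
  unfolding dclosed_def using K_deriv by blast

lemma dclosed_const: "dclosed S {f. \<exists>c. f = (\<lambda>x. c)}"
  unfolding dclosed_def by (auto intro!: exI[of _ "\<lambda>x v. 0"])

definition sg :: "real \<Rightarrow> real" where
  "sg t = Em 0 t * inverse (Em 0 t + Em 0 (1 + (-1) * t))"

definition sgd :: "real \<Rightarrow> real" where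
  "sgd t = (Em 2 t * Em 0 (1 - t) + Em 0 t * Em 2 (1 - t)) / (Em 0 t + Em 0 (1 - t))\<^sup>2"

lemma Em0_pos: "u > 0 \<Longrightarrow> Em 0 u > 0" by (simp add: Em_def)
lemma Em_nonneg: "Em m u \<ge> 0" by (simp add: Em_def)
lemma Em_le0: "u \<le> 0 \<Longrightarrow> Em m u = 0" by (simp add: Em_def)

lemma sg_den_pos: "Em 0 t + Em 0 (1 - t) > 0"
proof (cases "t > 0")
  case True then show ?thesis using Em0_pos[of t] Em_nonneg[of 0 "1-t"] by simp
next
  case False then show ?thesis using Em0_pos[of "1-t"] Em_nonneg[of 0 t] by simp
qed

lemma sg_alt: "sg t = Em 0 t / (Em 0 t + Em 0 (1 - t))"
  by (simp add: sg_def divide_inverse)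

lemma sg_0: "t \<le> 0 \<Longrightarrow> sg t = 0" by (simp add: sg_alt Em_le0)
lemma sg_1: "t \<ge> 1 \<Longrightarrow> sg t = 1"
  using sg_den_pos[of t] by (simp add: sg_alt Em_le0)
lemma sg_ge0: "sg t \<ge> 0" using sg_den_pos[of t] Em_nonneg[of 0 t] by (simp add: sg_alt)
lemma sg_le1: "sg t \<le> 1" using sg_den_pos[of t] Em_nonneg[of 0 "1-t"] by (simp add: sg_alt)

lemma sgd_ge0: "sgd t \<ge> 0"
  unfolding sgd_def by (intro divide_nonneg_nonneg add_nonneg_nonneg mult_nonneg_nonneg Em_nonneg) auto

lemma sgd_0: "t \<le> 0 \<or> t \<ge> 1 \<Longrightarrow> sgd t = 0"
  by (auto simp: sgd_def Em_le0)

lemma sg_deriv: "(sg has_real_derivative sgd t) (at t)"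
proof -
  have d0: "\<And>u. (Em 0 has_real_derivative Em 2 u) (at u)" using Em_deriv[of 0] by (simp add: numeral_2_eq_2)
  have "((\<lambda>t. Em 0 t / (Em 0 t + Em 0 (1 - t))) has_real_derivative sgd t) (at t)"
    using sg_den_pos[of t]
    apply -
    apply (rule derivative_eq_intros DERIV_chain2[OF d0] refl | simp)+
    apply (simp add: sgd_def field_simps power2_eq_square)
    done
  then show ?thesis by (simp add: sg_alt[abs_def])
qed

lemma sgd_cont: "isCont sgd t"
proof -
  have c: "\<And>m u. isCont (Em m) u" using Em_deriv by (blast intro: DERIV_isCont)
  have "isCont (\<lambda>t. (Em 2 t * Em 0 (1 - t) + Em 0 t * Em 2 (1 - t)) / (Em 0 t + Em 0 (1 - t))\<^sup>2) t"
    using sg_den_pos[of t]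
    by (intro continuous_intros isCont_o2[OF _ c] c) auto
  then show ?thesis unfolding sgd_def[abs_def] .
qed

lemma sgd_bound: "\<exists>M\<ge>0. \<forall>t. sgd t \<le> M"
proof -
  have "continuous_on {0..1} sgd" using sgd_cont by (simp add: continuous_at_imp_continuous_on)
  then have "compact (sgd ` {0..1})" by (rule compact_continuous_image) simp
  then obtain B where B: "\<forall>y\<in>sgd ` {0..1}. norm y \<le> B" using compact_imp_bounded bounded_iff by metis
  show ?thesis
  proof (intro exI[of _ "max B 0"] conjI allI)
    fix t show "sgd t \<le> max B 0"
    proof (cases "t \<in> {0..1}")
      case True then show ?thesis using B by force
    next
      case False then show ?thesis using sgd_0[of t] by auto
    qed
  qed simp
qed

definition Mg :: real where "Mg = (SOME M. M \<ge> 0 \<and> (\<forall>t. sgd t \<le> M))"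
lemma Mg: "Mg \<ge> 0" "sgd t \<le> Mg"
  using someI_ex[OF sgd_bound] unfolding Mg_def by auto

definition hf :: "real \<Rightarrow> real \<Rightarrow> real \<Rightarrow> real" where
  "hf \<eta> a t = (t + 2*\<eta>) * sg ((-1/\<eta>)*t + (-1)) + (t + (-a - 2*\<eta>)) * sg ((1/\<eta>)*t + (-a/\<eta> - 1))
     + ((-1)*t + (a + 2*\<eta>))"

definition hdv :: "real \<Rightarrow> real \<Rightarrow> real \<Rightarrow> real" where
  "hdv \<eta> a t = (let u = (-1/\<eta>)*t + (-1); v = (1/\<eta>)*t + (-a/\<eta> - 1) in
     sg u - (1 - u) * sgd u + sg v + (v - 1) * sgd v - 1)"

lemma hf_deriv: assumes "\<eta> > 0" shows "(hf \<eta> a has_real_derivative hdv \<eta> a t) (at t)"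
proof -
  note d = DERIV_chain2[OF sg_deriv]
  show ?thesis
    unfolding hf_def[abs_def] using assms
    apply -
    apply (rule derivative_eq_intros d refl | simp)+
    apply (simp add: hdv_def Let_def)
    apply (simp add: field_simps)
    done
qed

lemma hdv_le1: "hdv \<eta> a t \<le> 1"
proof -
  have A: "(1 - u) * sgd u \<ge> 0" for u
  proof (cases "u \<le> 0 \<or> u \<ge> 1")
    case True then show ?thesis using sgd_0[of u] by auto
  next
    case False then show ?thesis using sgd_ge0[of u] by (auto intro!: mult_nonneg_nonneg)
  qed
  have B: "(v - 1) * sgd v \<le> 0" for v
  proof (cases "v \<le> 0 \<or> v \<ge> 1")
    case True then show ?thesis using sgd_0[of v] by auto
  next
    case False then show ?thesis using sgd_ge0[of v] by (auto intro!: mult_nonpos_nonneg)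
  qed
  have "sg u - (1 - u) * sgd u + sg v + (v - 1) * sgd v - 1 \<le> 1" for u v
    using A[of u] B[of v] sg_le1[of u] sg_le1[of v] by linarith
  then show ?thesis unfolding hdv_def Let_def .
qed

lemma hdv_ge: "hdv \<eta> a t \<ge> -1 - 2 * Mg"
proof -
  have A: "(1 - u) * sgd u \<le> Mg" for u
  proof (cases "u \<le> 0 \<or> u \<ge> 1")
    case True then show ?thesis using sgd_0[of u] Mg by auto
  next
    case False
    then have "(1 - u) * sgd u \<le> 1 * Mg" using sgd_ge0[of u] Mg
      by (intro mult_mono) auto
    then show ?thesis by simp
  qed
  have B: "(v - 1) * sgd v \<ge> - Mg" for v
  proof (cases "v \<le> 0 \<or> v \<ge> 1")
    case True then show ?thesis using sgd_0[of v] Mg by auto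
  next
    case False
    then have "(1 - v) * sgd v \<le> 1 * Mg" using sgd_ge0[of v] Mg
      by (intro mult_mono) auto
    then show ?thesis by (simp add: algebra_simps)
  qed
  have "sg u - (1 - u) * sgd u + sg v + (v - 1) * sgd v - 1 \<ge> -1 - 2 * Mg" for u v
    using A[of u] B[of v] sg_ge0[of u] sg_ge0[of v] by linarith
  then show ?thesis unfolding hdv_def Let_def .
qed

lemma hf_top: assumes "\<eta> > 0" "a + 4*\<eta> \<le> 0" "t \<ge> -\<eta>" shows "hf \<eta> a t = 0"
proof -
  have "(-1/\<eta>)*t + (-1) \<le> 0" using assms by (simp add: field_simps)
  moreover have "(1/\<eta>)*t + (-a/\<eta> - 1) \<ge> 1" using assms by (simp add: field_simps)
  ultimately show ?thesis by (simp add: hf_def sg_0 sg_1)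
qed

lemma hf_bot: assumes "\<eta> > 0" "a + 4*\<eta> \<le> 0" "t \<le> a + \<eta>" shows "hf \<eta> a t = a + 4*\<eta>"
proof -
  have "(-1/\<eta>)*t + (-1) \<ge> 1" using assms by (simp add: field_simps)
  moreover have "(1/\<eta>)*t + (-a/\<eta> - 1) \<le> 0" using assms by (simp add: field_simps)
  ultimately show ?thesis by (simp add: hf_def sg_0 sg_1)
qed

lemma hf_mid: assumes "\<eta> > 0" "a + 2*\<eta> \<le> t" "t \<le> -2*\<eta>"
  shows "hf \<eta> a t = t + 2*\<eta>" "hdv \<eta> a t = 1"
proof -
  have u: "(-1/\<eta>)*t + (-1) \<ge> 1" using assms by (simp add: field_simps)
  moreover have v: "(1/\<eta>)*t + (-a/\<eta> - 1) \<ge> 1" using assms by (simp add: field_simps)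
  ultimately show "hf \<eta> a t = t + 2*\<eta>" by (simp add: hf_def sg_1)
  show "hdv \<eta> a t = 1" using u v by (simp add: hdv_def Let_def sg_1 sgd_0)
qed

lemma hf_bound: assumes "\<eta> > 0" shows "\<bar>t - hf \<eta> a t\<bar> \<le> 4*\<bar>t\<bar> + 2*\<bar>a\<bar> + 6*\<eta>"
proof -
  have b: "\<bar>x * sg y\<bar> \<le> \<bar>x\<bar>" for x y
    using sg_ge0[of y] sg_le1[of y] by (simp add: abs_mult mult_left_le)
  show ?thesis unfolding hf_def
    using b[of "t + 2*\<eta>" "(-1/\<eta>)*t + (-1)"] b[of "t + (-a - 2*\<eta>)" "(1/\<eta>)*t + (-a/\<eta> - 1)"] assms
    by arith
qed

definition lf :: "real \<Rightarrow> real" where "lf r = ln ((2 - r) / (1 - r))"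
definition phi :: "real \<Rightarrow> real \<Rightarrow> real" where "phi e r = - (lf r powr e)"
definition phid :: "real \<Rightarrow> real \<Rightarrow> real" where
  "phid e r = - e * (lf r powr e / lf r) / ((1 - r) * (2 - r))"

lemma lf_ge: assumes "0 \<le> r" "r < 1" shows "lf r \<ge> ln 2" and "0 < r \<Longrightarrow> lf r > ln 2"
proof -
  have "(2 - r) / (1 - r) \<ge> 2" using assms by (simp add: field_simps)
  then show "lf r \<ge> ln 2" unfolding lf_def by simp
  assume "0 < r"
  then have "(2 - r) / (1 - r) > 2" using assms by (simp add: field_simps)
  then show "lf r > ln 2" unfolding lf_def by simp
qed

lemma lf_pos: "0 \<le> r \<Longrightarrow> r < 1 \<Longrightarrow> lf r > 0"
  using lf_ge(1)[of r] ln_gt_zero[of 2] by linarith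

lemma phi_deriv: assumes "0 \<le> r" "r < 1"
  shows "(phi e has_real_derivative phid e r) (at r)"
proof -
  have l: "(lf has_real_derivative 1 / ((1 - r) * (2 - r))) (at r)"
    unfolding lf_def[abs_def] using assms
    apply -
    by (rule derivative_eq_intros refl | simp)+
  show ?thesis
    unfolding phi_def[abs_def] using assms lf_pos[OF assms]
    apply -
    apply (rule derivative_eq_intros l refl | simp)+
    apply (simp add: phid_def powr_diff field_simps)
    done
qed

lemma alg_key:
  fixes r xy Y s :: real
  assumes r: "0 < r" "r < 1" and xy: "0 < xy" and Y: "Y \<ge> 0" and cs: "xy\<^sup>2 \<le> r\<^sup>2 * Y"
    and s: "s = sqrt ((1 - r\<^sup>2) * Y + xy\<^sup>2)"
  shows "xy * (1 - r\<^sup>2)\<^sup>2 * s \<le> r * (1 - r)\<^sup>2 * (s + xy)\<^sup>2"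
proof -
  have r2: "r\<^sup>2 < 1\<^sup>2" using r by (intro power_strict_mono) auto
  then have a: "1 - r\<^sup>2 > 0" by simp
  have s0: "s \<ge> 0" using s a Y by simp
  have "r\<^sup>2 * ((1 - r\<^sup>2) * Y + xy\<^sup>2) \<ge> (1 - r\<^sup>2) * xy\<^sup>2 + r\<^sup>2 * xy\<^sup>2"
  proof -
    have "(1 - r\<^sup>2) * xy\<^sup>2 \<le> (1 - r\<^sup>2) * (r\<^sup>2 * Y)" using cs a by (intro mult_left_mono) auto
    then show ?thesis by (simp add: algebra_simps)
  qed
  moreover have "s\<^sup>2 = (1 - r\<^sup>2) * Y + xy\<^sup>2" using s a Y by simp
  then have "(r * s)\<^sup>2 = r\<^sup>2 * ((1 - r\<^sup>2) * Y + xy\<^sup>2)" by (simp add: power_mult_distrib)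
  moreover have "(1 - r\<^sup>2) * xy\<^sup>2 + r\<^sup>2 * xy\<^sup>2 = xy\<^sup>2" by (simp add: algebra_simps)
  ultimately have rs2: "(r * s)\<^sup>2 \<ge> xy\<^sup>2" by linarith
  have rs: "r * s \<ge> xy"
    by (rule power2_le_imp_le[OF rs2]) (use s0 r in simp)
  define t where "t = xy / r"
  have xyt: "xy = r * t" using r by (simp add: t_def)
  have st: "s \<ge> t" unfolding t_def using rs r by (simp add: pos_divide_le_eq mult.commute)
  have t0: "t > 0" using xy r by (simp add: t_def)
  have "r\<^sup>2 * t \<le> 1 * t" using r2 t0 by (intro mult_right_mono) auto
  then have "(s - t) * (s - r\<^sup>2 * t) \<ge> 0" using st by (intro mult_nonneg_nonneg) auto
  then have k: "t * (1 + r)\<^sup>2 * s \<le> (s + r * t)\<^sup>2"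
    by (simp add: algebra_simps power2_eq_square)
  have "xy * (1 - r\<^sup>2)\<^sup>2 * s = r * (1 - r)\<^sup>2 * (t * (1 + r)\<^sup>2 * s)"
    by (simp add: xyt algebra_simps power2_eq_square)
  also have "\<dots> \<le> r * (1 - r)\<^sup>2 * (s + r * t)\<^sup>2"
    using k r by (intro mult_left_mono) auto
  finally show ?thesis by (simp add: xyt)
qed


lemma berwald_pos:
  fixes x y :: "real^'n"
  assumes "norm x < 1" "y \<noteq> 0"
  shows "berwald x y > 0"
proof -
  define a where "a = 1 - (norm x)\<^sup>2"
  define s where "s = sqrt (a * (norm y)\<^sup>2 + (inner x y)\<^sup>2)"
  have "(norm x)\<^sup>2 < 1\<^sup>2" using assms by (intro power_strict_mono) auto
  then have a: "a > 0" by (simp add: a_def)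
  have "a * (norm y)\<^sup>2 > 0" using a assms by simp
  then have "a * (norm y)\<^sup>2 + (inner x y)\<^sup>2 > (inner x y)\<^sup>2" by simp
  then have "s > sqrt ((inner x y)\<^sup>2)" unfolding s_def by (rule real_sqrt_less_mono)
  then have "s > \<bar>inner x y\<bar>" by simp
  then have "s + inner x y > 0" "s > 0" by auto
  then show ?thesis unfolding berwald_def Let_def a_def[symmetric] s_def[symmetric] using a
    by (simp add: power2_eq_square)
qed

lemma ratio_bound:
  fixes x y :: "real^'n"
  assumes x: "norm x < 1" "x \<noteq> 0" and y: "y \<noteq> 0" and k: "\<kappa> \<ge> 0"
  shows "\<kappa> * inner x y / berwald x y \<le> \<kappa> * norm x * (1 - norm x)\<^sup>2"
proof -
  have F: "berwald x y > 0" using berwald_pos x y by blast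
  have r0: "0 < norm x" using x by simp
  have rhs0: "\<kappa> * norm x * (1 - norm x)\<^sup>2 \<ge> 0" using k r0 by simp
  show ?thesis
  proof (cases "\<kappa> * inner x y \<le> 0")
    case True
    then have "\<kappa> * inner x y / berwald x y \<le> 0" using F by (simp add: divide_nonpos_pos)
    then show ?thesis using rhs0 by linarith
  next
    case False
    then have kp: "\<kappa> > 0" and xy: "inner x y > 0" using k
      by (auto simp: zero_less_mult_iff mult_le_0_iff)
    define a where "a = 1 - (norm x)\<^sup>2"
    define s where "s = sqrt (a * (norm y)\<^sup>2 + (inner x y)\<^sup>2)"
    have "(norm x)\<^sup>2 < 1\<^sup>2" using x by (intro power_strict_mono) auto
    then have a: "a > 0" by (simp add: a_def)
    have cs: "(inner x y)\<^sup>2 \<le> (norm x)\<^sup>2 * (norm y)\<^sup>2"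
    proof -
      have "\<bar>inner x y\<bar> \<le> norm x * norm y" by (rule Cauchy_Schwarz_ineq2)
      then have "\<bar>inner x y\<bar>\<^sup>2 \<le> (norm x * norm y)\<^sup>2" by (intro power_mono) auto
      then show ?thesis by (simp add: power_mult_distrib)
    qed
    have key: "inner x y * a\<^sup>2 * s \<le> norm x * (1 - norm x)\<^sup>2 * (s + inner x y)\<^sup>2"
      unfolding a_def by (rule alg_key[OF r0 x(1) xy _ cs]) (simp_all add: s_def a_def)
    have s0: "s > 0"
    proof -
      have "a * (norm y)\<^sup>2 > 0" using a y by simp
      then show ?thesis unfolding s_def using xy by (intro real_sqrt_gt_zero) (simp add: add_pos_nonneg)
    qed
    have Fe: "berwald x y = (s + inner x y)\<^sup>2 / (a\<^sup>2 * s)"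
      unfolding berwald_def Let_def a_def[symmetric] s_def[symmetric] ..
    have sp: "(s + inner x y)\<^sup>2 > 0" using s0 xy by simp
    have "\<kappa> * inner x y / berwald x y = \<kappa> * (inner x y * a\<^sup>2 * s / (s + inner x y)\<^sup>2)"
      unfolding Fe using s0 a sp by (simp add: field_simps)
    also have "\<dots> \<le> \<kappa> * (norm x * (1 - norm x)\<^sup>2)"
      using key sp kp by (intro mult_left_mono) (simp_all add: divide_le_eq)
    finally show ?thesis by (simp add: mult.assoc)
  qed
qed

lemma cometric_bound:
  fixes x :: "real^'n"
  assumes x: "norm x < 1" "x \<noteq> 0" and k: "\<kappa> \<ge> 0"
  shows "cometric berwald x (\<lambda>z. \<kappa> * inner x z) \<le> \<kappa> * norm x * (1 - norm x)\<^sup>2"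
    and "cometric berwald x (\<lambda>z. \<kappa> * inner x z) \<ge> 0"
proof -
  have ne: "- {0::real^'n} \<noteq> {}" using x by auto
  show ub: "cometric berwald x (\<lambda>z. \<kappa> * inner x z) \<le> \<kappa> * norm x * (1 - norm x)\<^sup>2"
    unfolding cometric_def using ne by (intro cSUP_least) (use ratio_bound[OF x _ k] in auto)
  have "\<kappa> * inner x x / berwald x x \<le> cometric berwald x (\<lambda>z. \<kappa> * inner x z)"
    unfolding cometric_def
  proof (rule cSUP_upper)
    show "x \<in> - {0}" using x by simp
    show "bdd_above ((\<lambda>y. \<kappa> * inner x y / berwald x y) ` (- {0}))"
      by (rule bdd_aboveI2[where M="\<kappa> * norm x * (1 - norm x)\<^sup>2"]) (use ratio_bound[OF x _ k] in auto)
  qed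
  moreover have "\<kappa> * inner x x / berwald x x \<ge> 0"
    using berwald_pos[OF x(1) x(2)] k by simp
  ultimately show "cometric berwald x (\<lambda>z. \<kappa> * inner x z) \<ge> 0" by linarith
qed

lemma phiK: "(\<lambda>x::'a::real_inner. phi e (norm x)) \<in> K"
proof -
  have g: "(\<lambda>x::'a. (2 + (-1) * norm x) * inverse (1 + (-1) * norm x)) \<in> K"
    by (intro K.Kmul K.Kadd K.Kc K.Kn K.Kinv) (auto simp: S0_def)
  have l: "(\<lambda>x::'a. ln ((2 + (-1) * norm x) * inverse (1 + (-1) * norm x))) \<in> K"
    by (rule K.Kln[OF g]) (auto simp: S0_def field_simps)
  have p: "(\<lambda>x::'a. ln ((2 + (-1) * norm x) * inverse (1 + (-1) * norm x)) powr e) \<in> K"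
  proof (rule K.Kpow[OF l], intro ballI)
    fix x :: 'a assume "x \<in> S0"
    then have "lf (norm x) > 0" by (intro lf_pos) (auto simp: S0_def)
    then show "ln ((2 + (-1) * norm x) * inverse (1 + (-1) * norm x)) > 0"
      by (simp add: lf_def divide_inverse)
  qed
  have "(\<lambda>x::'a. (-1) * (ln ((2 + (-1) * norm x) * inverse (1 + (-1) * norm x)) powr e)) \<in> K"
    by (rule K.Kmul[OF K.Kc p])
  moreover have "(\<lambda>x::'a. (-1) * (ln ((2 + (-1) * norm x) * inverse (1 + (-1) * norm x)) powr e))
      = (\<lambda>x. phi e (norm x))"
    by (simp add: phi_def lf_def divide_inverse)
  ultimately show ?thesis by simp
qed

lemma sgK: "G \<in> K \<Longrightarrow> (\<lambda>x. sg (G x)) \<in> K"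
  unfolding sg_def
  by (intro K.Kmul K.KE K.Kinv K.Kadd K.Kc) (use sg_den_pos in \<open>auto dest: sym[THEN eq_iff_diff_eq_0[THEN iffD1]]\<close>, metis less_irrefl sg_den_pos)

lemma hfK: assumes "G \<in> K" shows "(\<lambda>x. hf \<eta> a (G x)) \<in> K"
proof -
  have s1: "(\<lambda>x. sg ((-1/\<eta>) * G x + (-1))) \<in> K"
    by (intro sgK K.Kadd K.Kmul K.Kc assms)
  have s2: "(\<lambda>x. sg ((1/\<eta>) * G x + (-a/\<eta> - 1))) \<in> K"
    by (intro sgK K.Kadd K.Kmul K.Kc assms)
  show ?thesis unfolding hf_def
    by (intro K.Kadd K.Kmul K.Kc assms s1 s2)
qed

definition w0 :: "real \<Rightarrow> real" where "w0 e = - (ln 2 powr e)"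
definition eta :: "nat \<Rightarrow> real" where "eta k = 1 / (real k + 5)"
definition aa :: "real \<Rightarrow> nat \<Rightarrow> real" where "aa e k = w0 e + eta k"

lemma phi_0: "phi e 0 = w0 e" by (simp add: phi_def lf_def w0_def)

lemma w0_le: "e \<le> 0 \<Longrightarrow> w0 e \<le> -1"
proof -
  assume e: "e \<le> 0"
  have "ln 2 powr 0 \<le> ln (2::real) powr e"
    using e ln_2_less_1 by (intro powr_mono') auto
  then show ?thesis by (simp add: w0_def)
qed

lemma eta_pos: "eta k > 0" and eta_le: "eta k \<le> 1/5"
  by (auto simp: eta_def field_simps)

lemma phi_ge: assumes "e < 0" "0 \<le> r" "r < 1" shows "phi e r \<ge> w0 e" and "0 < r \<Longrightarrow> phi e r > w0 e"
  and "phi e r < 0"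
proof -
  have l2: "ln (2::real) > 0" by simp
  show "phi e r \<ge> w0 e" unfolding phi_def w0_def
    using powr_mono2'[of e "ln 2" "lf r"] lf_ge(1)[OF assms(2,3)] assms l2 by simp
  show "0 < r \<Longrightarrow> phi e r > w0 e" unfolding phi_def w0_def
    using powr_less_mono2_neg[of e "ln 2" "lf r"] lf_ge(2)[OF assms(2,3)] assms l2 by simp
  show "phi e r < 0" unfolding phi_def using lf_pos[OF assms(2,3)] by simp
qed

definition vk :: "real \<Rightarrow> nat \<Rightarrow> real^'n \<Rightarrow> real" where
  "vk e k x = (if norm x < 1 then hf (eta k) (aa e k) (phi e (norm x)) else 0)"

lemma aa_cond: "e \<le> 0 \<Longrightarrow> aa e k + 4 * eta k \<le> 0"
  using w0_le[of e] eta_le[of k] by (simp add: aa_def)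

lemma phi_lim1: assumes "e < 0" shows "(phi e \<longlongrightarrow> 0) (at_left 1)"
proof -
  have "filterlim (\<lambda>r::real. (2 - r) / (1 - r)) at_top (at_left 1)"
    unfolding filterlim_at_top
  proof
    fix Z :: real
    show "eventually (\<lambda>r. Z \<le> (2 - r) / (1 - r)) (at_left 1)"
      unfolding eventually_at_left_field
    proof (intro exI[of _ "1 - 1 / (\<bar>Z\<bar> + 1)"] conjI allI impI)
      show "1 - 1 / (\<bar>Z\<bar> + 1) < 1" by (simp add: add_pos_nonneg)
      fix y :: real assume y: "1 - 1 / (\<bar>Z\<bar> + 1) < y" "y < 1"
      have z: "\<bar>Z\<bar> + 1 > 0" by simp
      have "(\<bar>Z\<bar> + 1) * (1 - y) < 1" using y z by (simp add: field_simps)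
      then have "\<bar>Z\<bar> + 1 < 1 / (1 - y)" using y by (simp add: field_simps)
      also have "1 / (1 - y) \<le> (2 - y) / (1 - y)" using y by (simp add: divide_right_mono)
      finally show "Z \<le> (2 - y) / (1 - y)" by linarith
    qed
  qed
  then have "filterlim lf at_top (at_left 1)"
    unfolding lf_def[abs_def] by (rule filterlim_compose[OF ln_at_top])
  then have "((\<lambda>r. lf r powr e) \<longlongrightarrow> 0) (at_left 1)" by (rule tendsto_neg_powr[OF assms])
  then show ?thesis unfolding phi_def[abs_def] using tendsto_minus by fastforce
qed

lemma support_radius: assumes "e < 0" "c > 0"
  shows "\<exists>R<1. \<forall>r. R \<le> r \<and> r < 1 \<longrightarrow> phi e r > - c"
proof -
  have "eventually (\<lambda>r. phi e r > - c) (at_left 1)"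
    using phi_lim1[OF assms(1)] assms(2) by (intro order_tendstoD(1)) auto
  then obtain b where b: "b < 1" "\<forall>y>b. y < 1 \<longrightarrow> phi e y > - c"
    unfolding eventually_at_left_field by blast
  show ?thesis by (rule exI[of _ "(b+1)/2"]) (use b in auto)
qed

lemma vk_Cinf0: assumes e: "e < 0" shows "vk e k \<in> Cinf0 (ball 0 1)"
proof -
  define \<eta> where "\<eta> = eta k"
  define a where "a = aa e k"
  have \<eta>: "\<eta> > 0" "a + 4*\<eta> \<le> 0" using eta_pos aa_cond e by (auto simp: \<eta>_def a_def)
  have vk: "vk e k x = (if norm x < 1 then hf \<eta> a (phi e (norm x)) else 0)" for x :: "real^'n"
    by (simp add: vk_def \<eta>_def a_def)
  have smooth: "smooth_on (ball 0 1) (vk e k)"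
  proof (rule smooth_local, intro ballI)
    fix x :: "real^'n" assume x: "x \<in> ball 0 1"
    show "\<exists>S C g. open S \<and> x \<in> S \<and> dclosed S C \<and> g \<in> C \<and> (\<forall>y\<in>S. vk e k y = g y)"
    proof (cases "x = 0")
      case False
      have g: "(\<lambda>y::real^'n. hf \<eta> a (phi e (norm y))) \<in> K" by (rule hfK[OF phiK])
      have xs: "x \<in> S0" using x False by (simp add: S0_def)
      have eq: "\<forall>y\<in>S0. vk e k y = hf \<eta> a (phi e (norm y))" by (simp add: S0_def vk)
      show ?thesis using open_S0 xs dclosed_K g eq by blast
    next
      case True
      have "isCont (phi e) 0" by (rule DERIV_isCont[OF phi_deriv[of 0 e, OF order_refl zero_less_one]])
      then have "phi e \<midarrow>0\<rightarrow> phi e 0" by (simp add: isCont_def)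
      from LIM_D[OF this \<eta>(1)] obtain d where
        d: "d > 0" "\<forall>r. r \<noteq> 0 \<and> norm (r - 0) < d \<longrightarrow> norm (phi e r - phi e 0) < \<eta>"
        by blast
      have "\<forall>y\<in>ball (0::real^'n) (min d 1). vk e k y = a + 4 * \<eta>"
      proof
        fix y :: "real^'n" assume y: "y \<in> ball 0 (min d 1)"
        have "phi e (norm y) \<le> a + \<eta>"
        proof (cases "y = 0")
          case True then show ?thesis using \<eta> by (simp add: phi_0 a_def aa_def \<eta>_def)
        next
          case False
          have "norm y \<noteq> 0" "norm (norm y - 0) < d" using y False by auto
          then have "norm (phi e (norm y) - phi e 0) < \<eta>" using d(2) by blast
          then show ?thesis by (simp add: phi_0 a_def aa_def \<eta>_def abs_less_iff)
        qed
        then show "vk e k y = a + 4 * \<eta>" using y hf_bot[OF \<eta>] by (simp add: vk)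
      qed
      moreover have "open (ball (0::real^'n) (min d 1))" by simp
      moreover have "x \<in> ball 0 (min d 1)" using True d by simp
      moreover have "(\<lambda>_::real^'n. a + 4*\<eta>) \<in> {f. \<exists>c. f = (\<lambda>x::real^'n. c)}" by blast
      ultimately show ?thesis using dclosed_const by blast
    qed
  qed
  obtain R where R: "R < 1" "\<forall>r. R \<le> r \<and> r < 1 \<longrightarrow> phi e r > - \<eta>"
    using support_radius[OF e \<eta>(1)] by blast
  have sub: "{x. vk e k x \<noteq> 0} \<subseteq> cball 0 R"
  proof
    fix x :: "real^'n" assume "x \<in> {x. vk e k x \<noteq> 0}"
    then have x: "vk e k x \<noteq> 0" by simp
    then have n1: "norm x < 1" by (auto simp: vk split: if_splits)
    show "x \<in> cball 0 R"
    proof (rule ccontr)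
      assume "x \<notin> cball 0 R"
      then have "R \<le> norm x" by simp
      then have "phi e (norm x) > - \<eta>" using R(2) n1 by blast
      then have "phi e (norm x) \<ge> - \<eta>" by simp
      then have "vk e k x = 0" using hf_top[OF \<eta>] n1 by (simp add: vk)
      then show False using x by simp
    qed
  qed
  then have cl: "closure {x. vk e k x \<noteq> 0} \<subseteq> cball 0 R"
    by (intro closure_minimal) auto
  have "compact (closure {x. vk e k x \<noteq> 0})"
    using bounded_subset[OF bounded_cball sub] by simp
  moreover have "closure {x. vk e k x \<noteq> 0} \<subseteq> ball 0 1" using cl R by auto
  ultimately show ?thesis using smooth unfolding Cinf0_def by blast
qed

definition C2 :: "real \<Rightarrow> real" where "C2 e = (2 + 2 * Mg) * (- e) * (ln 2 powr e / ln 2)"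
definition C1 :: "real \<Rightarrow> real" where "C1 e = 6 * \<bar>w0 e\<bar> + 8"

lemma phid_nonneg: "e < 0 \<Longrightarrow> 0 \<le> r \<Longrightarrow> r < 1 \<Longrightarrow> phid e r \<ge> 0"
  using lf_pos[of r] unfolding phid_def
  by (intro divide_nonneg_pos mult_nonneg_nonneg) auto

lemma diff_deriv:
  fixes x :: "real^'n"
  assumes e: "e < 0" and x: "0 < norm x" "norm x < 1"
  shows "((\<lambda>y. phi e (norm y) - vk e k y) has_derivative
          (\<lambda>z. ((1 - hdv (eta k) (aa e k) (phi e (norm x))) * phid e (norm x) / norm x) * inner x z)) (at x)"
proof -
  define \<eta> where "\<eta> = eta k"
  define a where "a = aa e k"
  have \<eta>: "\<eta> > 0" using eta_pos by (simp add: \<eta>_def)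
  define \<psi> where "\<psi> s = phi e s - hf \<eta> a (phi e s)" for s
  define r where "r = norm x"
  have r: "0 < r" "r < 1" using x by (auto simp: r_def)
  have dpsi: "(\<psi> has_real_derivative (1 - hdv \<eta> a (phi e r)) * phid e r) (at r)"
  proof -
    have p: "(phi e has_real_derivative phid e r) (at r)" using phi_deriv r by simp
    have "((\<lambda>s. hf \<eta> a (phi e s)) has_real_derivative hdv \<eta> a (phi e r) * phid e r) (at r)"
      by (rule DERIV_chain2[OF hf_deriv[OF \<eta>] p])
    from DERIV_diff[OF p this] show ?thesis unfolding \<psi>_def[abs_def] by (simp add: algebra_simps)
  qed
  have dn0: "(norm has_derivative (\<lambda>h. inverse (norm x) * inner h x)) (at x)"
    using has_derivative_norm[of x] x by (simp add: sgn_div_norm)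
  moreover have "(\<lambda>h. inverse (norm x) * inner h x) = (\<lambda>z. inner x z / r)"
    by (auto simp: fun_eq_iff r_def inner_commute divide_inverse mult.commute)
  ultimately have dn: "(norm has_derivative (\<lambda>z. inner x z / r)) (at x)" by simp
  have "((\<lambda>y. \<psi> (norm y)) has_derivative (\<lambda>z. (1 - hdv \<eta> a (phi e r)) * phid e r * (inner x z / r))) (at x)"
    using has_derivative_compose[OF dn dpsi[unfolded has_field_derivative_def r_def]]
    by (simp add: o_def mult.commute r_def[symmetric])
  then have D: "((\<lambda>y. \<psi> (norm y)) has_derivative (\<lambda>z. ((1 - hdv \<eta> a (phi e r)) * phid e r / r) * inner x z)) (at x)"
    by (simp add: field_simps)
  have eqs: "\<And>y. y \<in> S0 \<Longrightarrow> \<psi> (norm y) = phi e (norm y) - vk e k y"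
    by (simp add: S0_def vk_def \<psi>_def \<eta>_def a_def)
  have xs: "x \<in> S0" using x by (simp add: S0_def)
  show ?thesis
    using has_derivative_transform_within_open[OF D open_S0 xs eqs] by (simp add: r_def \<eta>_def a_def)
qed

lemma kappa_bound:
  assumes e: "e < 0" and r: "0 < r" "r < 1"
  shows "((1 - hdv (eta k) (aa e k) (phi e r)) * phid e r / r) \<ge> 0"
    and "((1 - hdv (eta k) (aa e k) (phi e r)) * phid e r / r) * r * (1 - r)\<^sup>2 \<le> C2 e"
proof -
  define h where "h = hdv (eta k) (aa e k) (phi e r)"
  have h1: "0 \<le> 1 - h" using hdv_le1 by (simp add: h_def)
  have h2: "1 - h \<le> 2 + 2 * Mg" using hdv_ge[of "eta k" "aa e k" "phi e r"] by (simp add: h_def)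
  have pd: "phid e r \<ge> 0" using phid_nonneg e r by simp
  show "((1 - hdv (eta k) (aa e k) (phi e r)) * phid e r / r) \<ge> 0"
    using h1 pd r by (simp add: h_def[symmetric])
  have l: "lf r \<ge> ln 2" using lf_ge r by simp
  have l2: "ln (2::real) > 0" by simp
  have "lf r powr e \<le> ln 2 powr e" using powr_mono2'[of e "ln 2" "lf r"] e l l2 by simp
  moreover have "1 / lf r \<le> 1 / ln 2"
  proof (rule divide_left_mono)
    have "lf r > 0" using l l2 by linarith
    then show "0 < lf r * ln 2" using l2 by simp
  qed (use l in auto)
  ultimately have q: "lf r powr e * (1 / lf r) \<le> ln 2 powr e * (1 / ln 2)"
    using l l2 lf_pos[of r] r by (intro mult_mono) auto
  then have q: "lf r powr e / lf r \<le> ln 2 powr e / ln 2" by simp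
  have fr: "(1 - r) / (2 - r) \<le> 1" "(1 - r) / (2 - r) \<ge> 0" using r by auto
  have eq: "((1 - h) * phid e r / r) * r * (1 - r)\<^sup>2 = (1 - h) * (- e) * (lf r powr e / lf r) * ((1 - r) / (2 - r))"
  proof -
    have aux: "\<And>(c::real) \<alpha> \<beta> r. \<alpha> \<noteq> 0 \<Longrightarrow> \<beta> \<noteq> 0 \<Longrightarrow> r \<noteq> 0 \<Longrightarrow>
        (c / (\<alpha> * \<beta>) / r) * r * \<alpha>\<^sup>2 = c * (\<alpha> / \<beta>)"
      by (simp add: field_simps power2_eq_square)
    have "1 - r \<noteq> 0" "2 - r \<noteq> 0" "r \<noteq> 0" using r by auto
    from aux[OF this, of "(1 - h) * (- e * (lf r powr e / lf r))"]
    show ?thesis by (simp add: phid_def mult.assoc)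
  qed
  have "(1 - h) * (- e) * (lf r powr e / lf r) * ((1 - r) / (2 - r)) \<le> (2 + 2 * Mg) * (- e) * (ln 2 powr e / ln 2) * 1"
    using h1 h2 q fr e lf_pos[of r] r Mg(1)
      mult_nonneg_nonneg[of "(2 + 2 * Mg) * (- e)" "ln 2 powr e / ln 2"]
      mult_nonneg_nonneg[of "2 + 2 * Mg" "- e"]
    by (intro mult_mono) (auto intro!: mult_nonneg_nonneg divide_nonneg_nonneg simp: Mg)
  then show "((1 - hdv (eta k) (aa e k) (phi e r)) * phid e r / r) * r * (1 - r)\<^sup>2 \<le> C2 e"
    using eq by (simp add: h_def C2_def)
qed

definition Ek :: "real \<Rightarrow> nat \<Rightarrow> (real^'n) set" where
  "Ek e k = {x \<in> ball 0 1. phi e (norm x) \<le> aa e k + 2 * eta k \<or> phi e (norm x) \<ge> - 2 * eta k}"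

lemma Ek_sets: "(Ek e k :: (real^'n) set) \<in> sets lebesgue"
proof -
  have m[measurable]: "(\<lambda>x::real^'n. phi e (norm x)) \<in> borel_measurable borel"
    unfolding phi_def lf_def by measurable
  have A: "{x::real^'n. phi e (norm x) \<le> aa e k + 2 * eta k \<or> phi e (norm x) \<ge> - 2 * eta k} \<in> sets borel"
  proof -
    have "(\<lambda>x::real^'n. phi e (norm x)) -` ({..aa e k + 2 * eta k} \<union> {- 2 * eta k..}) \<inter> space borel \<in> sets borel"
      by (rule measurable_sets[OF m]) simp
    moreover have "(\<lambda>x::real^'n. phi e (norm x)) -` ({..aa e k + 2 * eta k} \<union> {- 2 * eta k..}) \<inter> space borel
       = {x::real^'n. phi e (norm x) \<le> aa e k + 2 * eta k \<or> phi e (norm x) \<ge> - 2 * eta k}" by auto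
    ultimately show ?thesis by simp
  qed
  have B: "ball (0::real^'n) 1 \<in> sets borel" by simp
  have "(Ek e k :: (real^'n) set) = ball 0 1 \<inter> {x::real^'n. phi e (norm x) \<le> aa e k + 2 * eta k \<or> phi e (norm x) \<ge> - 2 * eta k}"
    by (auto simp: Ek_def)
  also have "\<dots> \<in> sets borel" by (rule sets.Int[OF B A])
  finally show ?thesis by simp
qed

lemma Ek_dec: "decseq (Ek e :: nat \<Rightarrow> (real^'n) set)"
proof (rule decseq_SucI)
  fix k
  have "eta (Suc k) \<le> eta k" by (simp add: eta_def frac_le)
  then show "Ek e (Suc k) \<subseteq> Ek e k" by (auto simp: Ek_def aa_def)
qed

lemma Ek_Inter: assumes e: "e < 0" shows "(\<Inter>k. Ek e k) \<subseteq> {0::real^'n}"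
proof
  fix x :: "real^'n" assume x: "x \<in> (\<Inter>k. Ek e k)"
  show "x \<in> {0}"
  proof (rule ccontr)
    assume "x \<notin> {0}"
    then have x0: "0 < norm x" by simp
    have x1: "norm x < 1" using x by (auto simp: Ek_def)
    define t where "t = phi e (norm x)"
    have t: "w0 e < t" "t < 0" using phi_ge[OF e _ x1] x0 by (auto simp: t_def)
    define \<delta> where "\<delta> = min ((t - w0 e) / 3) (- t / 2)"
    have "\<delta> > 0" using t by (simp add: \<delta>_def)
    then obtain n where n: "n \<noteq> 0" "inverse (real n) < \<delta>" using real_arch_inverse by blast
    have "eta n \<le> inverse (real n)" using n by (simp add: eta_def field_simps)
    then have "eta n < \<delta>" using n by linarith
    then have "eta n < (t - w0 e) / 3" "eta n < - t / 2" by (auto simp: \<delta>_def)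
    then have "t > aa e n + 2 * eta n" "t < - 2 * eta n" by (simp_all add: aa_def field_simps)
    then have "x \<notin> Ek e n" by (auto simp: Ek_def t_def)
    then show False using x by blast
  qed
qed

lemma Ek_lim: assumes e: "e < 0" shows "(\<lambda>k. emeasure lebesgue (Ek e k :: (real^'n) set)) \<longlonglongrightarrow> 0"
proof -
  have fin: "emeasure lebesgue (Ek e k :: (real^'n) set) \<noteq> \<infinity>" for k
  proof -
    have "(Ek e k :: (real^'n) set) \<subseteq> ball 0 1" by (auto simp: Ek_def)
    moreover have "ball (0::real^'n) 1 \<in> sets lebesgue"
      using lmeasurable_ball[of "0::real^'n" 1] by (simp add: fmeasurable_def)
    ultimately have "emeasure lebesgue (Ek e k :: (real^'n) set) \<le> emeasure lebesgue (ball (0::real^'n) 1)"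
      by (rule emeasure_mono)
    also have "\<dots> < \<infinity>" using lmeasurable_ball[of "0::real^'n" 1] by (simp add: fmeasurable_def)
    finally show ?thesis by simp
  qed
  have r: "range (Ek e :: nat \<Rightarrow> (real^'n) set) \<subseteq> sets lebesgue" using Ek_sets by auto
  have "(\<lambda>k. emeasure lebesgue (Ek e k :: (real^'n) set)) \<longlonglongrightarrow> emeasure lebesgue (\<Inter>k. (Ek e k :: (real^'n) set))"
    using Lim_emeasure_decseq[OF r Ek_dec fin] by simp
  moreover have "emeasure lebesgue (\<Inter>k. Ek e k :: (real^'n) set) = 0"
  proof -
    have "emeasure lebesgue (\<Inter>k. Ek e k :: (real^'n) set) \<le> emeasure lebesgue {0::real^'n}"
      using Ek_Inter[OF e] by (intro emeasure_mono) auto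
    also have "\<dots> = 0" by simp
    finally show ?thesis by simp
  qed
  ultimately show ?thesis by simp
qed

lemma enn_root_lim:
  assumes p: "p \<ge> 1" and le: "\<And>k. I k \<le> J k" and J: "J \<longlonglongrightarrow> 0"
  shows "(\<lambda>k. enn_root p (I k)) \<longlonglongrightarrow> 0"
proof -
  have ev: "eventually (\<lambda>k. J k < 1) sequentially"
    using J by (intro order_tendstoD(2)) auto
  have "(\<lambda>k. enn2real (J k)) \<longlonglongrightarrow> 0"
    using tendsto_enn2real[of J "0::real" sequentially] J by simp
  then have "(\<lambda>k. enn2real (J k) powr (1 / p)) \<longlonglongrightarrow> 0"
    using p by (intro tendsto_zero_powrI) auto
  then have lim: "(\<lambda>k. ennreal (enn2real (J k) powr (1 / p))) \<longlonglongrightarrow> 0"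
    using tendsto_ennrealI[of "\<lambda>k. enn2real (J k) powr (1 / p)" 0 sequentially] by simp
  have ev2: "eventually (\<lambda>k. enn_root p (I k) \<le> ennreal (enn2real (J k) powr (1 / p))) sequentially"
    using ev
  proof eventually_elim
    case (elim k)
    have "I k < 1" using le[of k] elim by (rule le_less_trans)
    have one: "(1::ennreal) < top" by (metis ennreal_1 ennreal_less_top)
    have "I k < top" using \<open>I k < 1\<close> one by (rule less_trans)
    then have fin: "I k \<noteq> \<infinity>" by simp
    have Jt: "J k < top" using elim one by (rule less_trans)
    have "enn2real (I k) \<le> enn2real (J k)"
      using le[of k] Jt by (rule enn2real_mono)
    then have "enn2real (I k) powr (1 / p) \<le> enn2real (J k) powr (1 / p)"
      using p by (intro powr_mono2) auto
    then show ?case using fin by (simp add: enn_root_def ennreal_leI)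
  qed
  show ?thesis
    by (rule tendsto_sandwich[OF _ ev2 tendsto_const lim]) auto
qed

lemma eta_lim: "eta \<longlonglongrightarrow> 0"
proof -
  have "filterlim (\<lambda>k. real k + 5) at_top sequentially"
    using filterlim_tendsto_add_at_top[OF tendsto_const[of "5::real"] filterlim_real_sequentially]
    by (simp add: add.commute)
  then have "(\<lambda>k. 1 / (real k + 5)) \<longlonglongrightarrow> 0"
    by (intro tendsto_divide_0[OF tendsto_const] filterlim_at_top_imp_at_infinity)
  then show ?thesis by (simp add: eta_def[abs_def])
qed

lemma pt1:
  fixes x :: "real^'n"
  assumes e: "e < 0" and p: "p \<ge> 1" and x: "norm x < 1"
  shows "ennreal (\<bar>phi e (norm x) - vk e k x\<bar> powr p)
           \<le> ennreal ((2 * eta k) powr p) + ennreal (C1 e powr p) * indicator (Ek e k) x"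
proof -
  define t where "t = phi e (norm x)"
  define \<eta> where "\<eta> = eta k"
  define a where "a = aa e k"
  have \<eta>: "\<eta> > 0" "\<eta> \<le> 1/5" using eta_pos eta_le by (auto simp: \<eta>_def)
  have v: "vk e k x = hf \<eta> a t" using x by (simp add: vk_def t_def \<eta>_def a_def)
  have t: "w0 e \<le> t" "t < 0" using phi_ge[OF e _ x] by (auto simp: t_def)
  have w: "w0 e \<le> -1" using w0_le e by simp
  show ?thesis
  proof (cases "x \<in> Ek e k")
    case True
    have "\<bar>t - hf \<eta> a t\<bar> \<le> 4 * \<bar>t\<bar> + 2 * \<bar>a\<bar> + 6 * \<eta>" by (rule hf_bound[OF \<eta>(1)])
    also have "\<dots> \<le> C1 e" using t w \<eta> by (simp add: C1_def a_def aa_def \<eta>_def[symmetric])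
    finally have "\<bar>t - hf \<eta> a t\<bar> powr p \<le> C1 e powr p" using p by (intro powr_mono2) auto
    then have "ennreal (\<bar>t - hf \<eta> a t\<bar> powr p) \<le> ennreal (C1 e powr p)" by (rule ennreal_leI)
    also have "\<dots> \<le> ennreal ((2 * eta k) powr p) + ennreal (C1 e powr p) * indicator (Ek e k) x"
      using True by (simp add: add_increasing)
    finally show ?thesis by (simp add: v t_def)
  next
    case False
    then have "t > a + 2 * \<eta>" "t < - 2 * \<eta>" using x by (auto simp: Ek_def t_def a_def \<eta>_def)
    then have "hf \<eta> a t = t + 2 * \<eta>" using hf_mid(1)[OF \<eta>(1)] by simp
    then have "\<bar>t - vk e k x\<bar> = 2 * eta k" using \<eta> by (simp add: v \<eta>_def)
    then show ?thesis using False by (simp add: t_def)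
  qed
qed

lemma pt2:
  fixes x :: "real^'n"
  assumes e: "e < 0" and p: "p \<ge> 1" and x: "norm x < 1" "x \<noteq> 0"
  shows "(if (\<lambda>y. phi e (norm y) - vk e k y) differentiable (at x)
          then ennreal (cometric berwald x (frechet_derivative (\<lambda>y. phi e (norm y) - vk e k y) (at x)) powr p)
          else \<infinity>) \<le> ennreal (C2 e powr p) * indicator (Ek e k) x"
proof -
  define r where "r = norm x"
  have r: "0 < r" "r < 1" using x by (auto simp: r_def)
  define \<kappa> where "\<kappa> = (1 - hdv (eta k) (aa e k) (phi e r)) * phid e r / r"
  have D: "((\<lambda>y. phi e (norm y) - vk e k y) has_derivative (\<lambda>z. \<kappa> * inner x z)) (at x)"
    using diff_deriv[OF e, of x k] r by (simp add: \<kappa>_def r_def)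
  then have dif: "(\<lambda>y. phi e (norm y) - vk e k y) differentiable (at x)" unfolding differentiable_def by blast
  have fd: "frechet_derivative (\<lambda>y. phi e (norm y) - vk e k y) (at x) = (\<lambda>z. \<kappa> * inner x z)"
    using frechet_derivative_at[OF D] by simp
  have k0: "\<kappa> \<ge> 0" and kb: "\<kappa> * r * (1 - r)\<^sup>2 \<le> C2 e" using kappa_bound[OF e r] by (auto simp: \<kappa>_def)
  have cb: "cometric berwald x (\<lambda>z. \<kappa> * inner x z) \<le> \<kappa> * r * (1 - r)\<^sup>2"
           "cometric berwald x (\<lambda>z. \<kappa> * inner x z) \<ge> 0"
    using cometric_bound[OF x k0] by (auto simp: r_def)
  show ?thesis
  proof (cases "x \<in> Ek e k")
    case True
    have "cometric berwald x (\<lambda>z. \<kappa> * inner x z) powr p \<le> C2 e powr p"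
      using cb kb p by (intro powr_mono2) auto
    then show ?thesis using True dif fd by (simp add: ennreal_leI)
  next
    case False
    then have "phi e r > aa e k + 2 * eta k" "phi e r < - 2 * eta k" using x by (auto simp: Ek_def r_def)
    then have "hdv (eta k) (aa e k) (phi e r) = 1" using hf_mid(2)[OF eta_pos] by simp
    then have "\<kappa> = 0" by (simp add: \<kappa>_def)
    then have "cometric berwald x (\<lambda>z. \<kappa> * inner x z) = 0" using cb kb by simp
    then show ?thesis using False dif fd by simp
  qed
qed

lemma ball_sets: "ball (0::real^'n) 1 \<in> sets lebesgue" and ball_fin: "emeasure lebesgue (ball (0::real^'n) 1) < \<infinity>"
  using lmeasurable_ball[of "0::real^'n" 1] by (simp_all add: fmeasurable_def)

lemma I1_bound:
  assumes e: "e < 0" and p: "p \<ge> 1"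
  shows "(\<integral>\<^sup>+ x \<in> ball (0::real^'n) 1. ennreal (\<bar>phi e (norm x) - vk e k x\<bar> powr p) \<partial>lebesgue)
     \<le> emeasure lebesgue (ball (0::real^'n) 1) * ennreal ((2 * eta k) powr p)
       + ennreal (C1 e powr p) * emeasure lebesgue (Ek e k :: (real^'n) set)"
proof -
  let ?B = "ball (0::real^'n) 1"
  let ?E = "Ek e k :: (real^'n) set"
  let ?A = "ennreal ((2 * eta k) powr p)"
  let ?C = "ennreal (C1 e powr p)"
  have "(\<integral>\<^sup>+ x \<in> ?B. ennreal (\<bar>phi e (norm x) - vk e k x\<bar> powr p) \<partial>lebesgue)
      \<le> (\<integral>\<^sup>+ x. ?A * indicator ?B x + ?C * indicator ?E x \<partial>lebesgue)"
  proof (rule nn_integral_mono)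
    fix x :: "real^'n"
    show "ennreal (\<bar>phi e (norm x) - vk e k x\<bar> powr p) * indicator ?B x \<le> ?A * indicator ?B x + ?C * indicator ?E x"
    proof (cases "x \<in> ?B")
      case True
      then show ?thesis using pt1[OF e p, of x k] by simp
    next
      case False
      then show ?thesis by simp
    qed
  qed
  also have "\<dots> = (\<integral>\<^sup>+ x. ?A * indicator ?B x \<partial>lebesgue) + (\<integral>\<^sup>+ x. ?C * indicator ?E x \<partial>lebesgue)"
  proof (rule nn_integral_add)
    show "(\<lambda>x. ?A * indicator ?B x) \<in> borel_measurable lebesgue"
      using ball_sets by (intro borel_measurable_times_ennreal borel_measurable_const borel_measurable_indicator)
    show "(\<lambda>x. ?C * indicator ?E x) \<in> borel_measurable lebesgue"
      using Ek_sets by (intro borel_measurable_times_ennreal borel_measurable_const borel_measurable_indicator)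
  qed
  also have "\<dots> = ?A * emeasure lebesgue ?B + ?C * emeasure lebesgue ?E"
    by (simp only: nn_integral_cmult_indicator[OF ball_sets] nn_integral_cmult_indicator[OF Ek_sets])
  finally show ?thesis by (simp add: mult.commute)
qed

lemma I2_bound:
  assumes e: "e < 0" and p: "p \<ge> 1"
  shows "(\<integral>\<^sup>+ x \<in> ball (0::real^'n) 1. (if (\<lambda>y. phi e (norm y) - vk e k y) differentiable (at x)
          then ennreal (cometric berwald x (frechet_derivative (\<lambda>y. phi e (norm y) - vk e k y) (at x)) powr p)
          else \<infinity>) \<partial>lebesgue)
     \<le> ennreal (C2 e powr p) * emeasure lebesgue (Ek e k :: (real^'n) set)"
proof -
  let ?B = "ball (0::real^'n) 1"
  let ?E = "Ek e k :: (real^'n) set"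
  let ?f = "\<lambda>x::real^'n. (if (\<lambda>y. phi e (norm y) - vk e k y) differentiable (at x)
          then ennreal (cometric berwald x (frechet_derivative (\<lambda>y. phi e (norm y) - vk e k y) (at x)) powr p)
          else \<infinity>)"
  have "(\<integral>\<^sup>+ x. ?f x * indicator ?B x \<partial>lebesgue) \<le> (\<integral>\<^sup>+ x. ennreal (C2 e powr p) * indicator ?E x \<partial>lebesgue)"
  proof (rule nn_integral_mono_AE)
    show "AE x in lebesgue. ?f x * indicator ?B x \<le> ennreal (C2 e powr p) * indicator ?E x"
      using AE_completion[OF AE_lborel_singleton[of "0::real^'n"]]
    proof eventually_elim
      case (elim x)
      show ?case
      proof (cases "x \<in> ?B")
        case True
        then show ?thesis using pt2[OF e p, of x k] elim by simp
      next
        case False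
        then show ?thesis by simp
      qed
    qed
  qed
  also have "\<dots> = ennreal (C2 e powr p) * emeasure lebesgue ?E"
    by (simp only: nn_integral_cmult_indicator[OF Ek_sets])
  finally show ?thesis .
qed

theorem lemma3p6:
  fixes p :: real
  assumes "1 \<le> p"
  shows "(\<lambda>x::real^'n. - ((ln ((2 - norm x) / (1 - norm x))) powr (- 1 / real CARD('n))))
           \<in> W0 berwald (ball 0 1) lebesgue p"
proof -
  define e where "e = - 1 / real CARD('n)"
  have e: "e < 0" unfolding e_def by simp
  have p: "p \<ge> 1" using assms .
  have u: "(\<lambda>x::real^'n. - ((ln ((2 - norm x) / (1 - norm x))) powr (- 1 / real CARD('n))))
      = (\<lambda>x. phi e (norm x))" by (simp add: phi_def lf_def e_def)
  define J1 where "J1 k = emeasure lebesgue (ball (0::real^'n) 1) * ennreal ((2 * eta k) powr p)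
       + ennreal (C1 e powr p) * emeasure lebesgue (Ek e k :: (real^'n) set)" for k
  define J2 where "J2 k = ennreal (C2 e powr p) * emeasure lebesgue (Ek e k :: (real^'n) set)" for k
  have EL: "(\<lambda>k. emeasure lebesgue (Ek e k :: (real^'n) set)) \<longlonglongrightarrow> 0" by (rule Ek_lim[OF e])
  have "(\<lambda>k. (2 * eta k) powr p) \<longlonglongrightarrow> 0"
    using p eta_lim eta_pos by (intro tendsto_zero_powrI tendsto_mult_right_zero) (auto intro!: always_eventually less_imp_le)
  then have "(\<lambda>k. ennreal ((2 * eta k) powr p)) \<longlonglongrightarrow> 0"
    using tendsto_ennrealI[of "\<lambda>k. (2 * eta k) powr p" 0 sequentially] by simp
  then have t1: "(\<lambda>k. emeasure lebesgue (ball (0::real^'n) 1) * ennreal ((2 * eta k) powr p)) \<longlonglongrightarrow> 0"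
    using ennreal_tendsto_cmult[OF ball_fin[unfolded infinity_ennreal_def]] by fastforce
  have t2: "(\<lambda>k. ennreal (C1 e powr p) * emeasure lebesgue (Ek e k :: (real^'n) set)) \<longlonglongrightarrow> 0"
    using ennreal_tendsto_cmult[OF _ EL, of "ennreal (C1 e powr p)"] by simp
  have J1: "J1 \<longlonglongrightarrow> 0" unfolding J1_def[abs_def] using tendsto_add[OF t1 t2] by simp
  have J2: "J2 \<longlonglongrightarrow> 0" unfolding J2_def[abs_def] using ennreal_tendsto_cmult[OF _ EL, of "ennreal (C2 e powr p)"] by simp
  have lim: "(\<lambda>k. sobolev_norm berwald (ball (0::real^'n) 1) lebesgue p (\<lambda>x. phi e (norm x) - vk e k x)) \<longlonglongrightarrow> 0"
  proof -
    have a: "(\<lambda>k. enn_root p (\<integral>\<^sup>+ x \<in> ball (0::real^'n) 1. ennreal (\<bar>phi e (norm x) - vk e k x\<bar> powr p) \<partial>lebesgue)) \<longlonglongrightarrow> 0"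
      by (rule enn_root_lim[OF p _ J1]) (unfold J1_def, rule I1_bound[OF e p])
    have b: "(\<lambda>k. enn_root p (\<integral>\<^sup>+ x \<in> ball (0::real^'n) 1. (if (\<lambda>y. phi e (norm y) - vk e k y) differentiable (at x)
          then ennreal (cometric berwald x (frechet_derivative (\<lambda>y. phi e (norm y) - vk e k y) (at x)) powr p)
          else \<infinity>) \<partial>lebesgue)) \<longlonglongrightarrow> 0"
      by (rule enn_root_lim[OF p _ J2]) (unfold J2_def, rule I2_bound[OF e p])
    show ?thesis unfolding sobolev_norm_def using tendsto_add[OF a b] by simp
  qed
  show ?thesis unfolding u W0_def
    using vk_Cinf0[OF e] lim by blast
qed


end
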